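(* Let $R$ be a left localizable ring such that $\max\mathrm{Den}_l(R)=\{S_1,\ldots,S_n\}$ (with the $S_i$ distinct), and let $\mathfrak{a}_j:=\mathrm{ass}(S_j)$. (1) If $n=1$ then $S_{1,c}=S_1=R\setminus\{0\}$. (2) If $n\geq 2$ then $S_{i,c}=S_i\cap\bigcap_{j\neq i}\mathfrak{a}_j$ for each $i=1,\ldots,n$.
   Context: All rings are associative with $1$. A multiplicative subset $S$ of $R$ ($1\in S$, $0\notin S$, closed under multiplication) is a left Ore set if $Sr\cap Rs\neq\emptyset$ for all $r\in R$, $s\in S$; for it, $\mathrm{ass}(S):=\{r\in R: sr=0\text{ for some } s\in S\}$. A left Ore set $S$ is a left denominator set if $rs=0$ ($r\in R$, $s\in S$) implies $tr=0$ for some $t\in S$. $\max\mathrm{Den}_l(R)$ is the set of maximal elements, under inclusion, of the set of left denominator sets of $R$. A ring $R$ is left localizable if every nonzero $r\in R$ lies in some left denominator set. For $s\in R$, $\ker(s\cdot):=\{r\in R: sr=0\}$; the core of a left Ore set $S$ is $S_c:=\{s\in S:\ker(s\cdot)=\mathrm{ass}(S)\}$, and $S_{i,c}$ denotes the core of $S_i$. *)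

theory Defs
  imports Main
begin

text \<open>The ring R is the whole carrier of a type of class ring_1
  (associative, with 1; not necessarily commutative).\<close>

definition mult_subset :: "'a::ring_1 set \<Rightarrow> bool" where
  "mult_subset S \<longleftrightarrow> 1 \<in> S \<and> 0 \<notin> S \<and> (\<forall>a\<in>S. \<forall>b\<in>S. a * b \<in> S)"

definition left_Ore :: "'a::ring_1 set \<Rightarrow> bool" where
  "left_Ore S \<longleftrightarrow> mult_subset S \<and>
     (\<forall>r. \<forall>s\<in>S. \<exists>s'\<in>S. \<exists>r'. s' * r = r' * s)"

definition ass :: "'a::ring_1 set \<Rightarrow> 'a set" where
  "ass S = {r. \<exists>s\<in>S. s * r = 0}"

definition left_den :: "'a::ring_1 set \<Rightarrow> bool" where
  "left_den S \<longleftrightarrow> left_Ore S \<and>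
     (\<forall>r. \<forall>s\<in>S. r * s = 0 \<longrightarrow> (\<exists>t\<in>S. t * r = 0))"

definition maxDen_l :: "'a::ring_1 set set" where
  "maxDen_l = {S. left_den S \<and> (\<forall>T. left_den T \<longrightarrow> S \<subseteq> T \<longrightarrow> T = S)}"

definition left_localizable :: "'a::ring_1 itself \<Rightarrow> bool" where
  "left_localizable _ \<longleftrightarrow> (\<forall>r::'a. r \<noteq> 0 \<longrightarrow> (\<exists>S. left_den S \<and> r \<in> S))"

definition kerl :: "'a::ring_1 \<Rightarrow> 'a set" where
  "kerl s = {r. s * r = 0}"

definition core :: "'a::ring_1 set \<Rightarrow> 'a set" where
  "core S = {s \<in> S. kerl s = ass S}"

end

theory Submission
  imports Defs
begin

inductive_set gen :: "'a::ring_1 set \<Rightarrow> 'a set" for X where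
  gen_one: "1 \<in> gen X"
| gen_step: "x \<in> gen X \<Longrightarrow> y \<in> X \<Longrightarrow> x * y \<in> gen X"

lemma gen_mult: "y \<in> gen X \<Longrightarrow> x \<in> gen X \<Longrightarrow> x * y \<in> gen X"
proof (induction y rule: gen.induct)
  case gen_one then show ?case by simp
next
  case (gen_step z y)
  then have "x * z \<in> gen X" by simp
  then have "(x * z) * y \<in> gen X" using gen_step(2) by (rule gen.gen_step)
  then show ?case by (simp add: mult.assoc)
qed

lemma gen_sub: "y \<in> X \<Longrightarrow> y \<in> gen X"
  using gen.gen_step[OF gen.gen_one] by fastforce

lemma gen_Ore:
  assumes ore: "\<And>y r. y \<in> X \<Longrightarrow> \<exists>m\<in>gen X. \<exists>r'. m * r = r' * y"
  shows "x \<in> gen X \<Longrightarrow> \<exists>m\<in>gen X. \<exists>r'. m * r = r' * x"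
proof (induction x arbitrary: r rule: gen.induct)
  case gen_one then show ?case using gen.gen_one by force
next
  case (gen_step x y)
  obtain m1 r1 where m1: "m1 \<in> gen X" "m1 * r = r1 * y" using ore[OF gen_step(2)] by blast
  obtain m2 r2 where m2: "m2 \<in> gen X" "m2 * r1 = r2 * x" using gen_step(3) by blast
  have "(m2 * m1) * r = r2 * (x * y)"
    by (metis m1(2) m2(2) mult.assoc)
  moreover have "m2 * m1 \<in> gen X" using gen_mult m1 m2 by blast
  ultimately show ?case by blast
qed

lemma den_zero_notin: "left_den S \<Longrightarrow> 0 \<notin> S"
  by (auto simp: left_den_def left_Ore_def mult_subset_def)

lemma den_mult: "left_den S \<Longrightarrow> a \<in> S \<Longrightarrow> b \<in> S \<Longrightarrow> a * b \<in> S"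
  by (auto simp: left_den_def left_Ore_def mult_subset_def)

lemma den_Ore: "left_den S \<Longrightarrow> s \<in> S \<Longrightarrow> \<exists>s'\<in>S. \<exists>r'. s' * r = r' * s"
  unfolding left_den_def left_Ore_def by blast

lemma den_den: "left_den S \<Longrightarrow> s \<in> S \<Longrightarrow> r * s = 0 \<Longrightarrow> \<exists>t\<in>S. t * r = 0"
  unfolding left_den_def by blast

context
  fixes dummy :: "'a::ring_1"
  assumes red: "\<And>x::'a. x * x = 0 \<Longrightarrow> x = 0"
begin

lemma red_rev: "(a::'a) * b = 0 \<Longrightarrow> b * a = 0"
proof -
  assume h: "a * b = 0"
  have "(b * a) * (b * a) = b * (a * b) * a" by (simp add: mult.assoc)
  then have "(b * a) * (b * a) = 0" using h by simp
  then show ?thesis by (rule red)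
qed

lemma red_ins: "(u::'a) * v = 0 \<Longrightarrow> u * r * v = 0"
proof -
  assume h: "u * v = 0"
  have vu: "v * u = 0" using red_rev[OF h] .
  have "(u * r * v) * (u * r * v) = u * r * (v * u) * r * v" by (simp add: mult.assoc)
  then have "(u * r * v) * (u * r * v) = 0" using vu by simp
  then show ?thesis by (rule red)
qed

lemma red_swap: "(a::'a) * t * y * b = 0 \<Longrightarrow> a * y * t * b = 0"
proof -
  assume h: "a * t * y * b = 0"
  have "a * (t * y * b) = 0" using h by (simp add: mult.assoc)
  then have "a * y * (t * y * b) = 0" by (rule red_ins)
  then have "(a * y * t) * (y * b) = 0" by (simp add: mult.assoc)
  then have "(a * y * t) * (b * a) * (y * b) = 0" by (rule red_ins)
  then have "(a * y * t * (b * a) * y) * b = 0" by (simp add: mult.assoc)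
  then have "(a * y * t * (b * a) * y) * t * b = 0" by (rule red_ins)
  moreover have "(a * y * t * b) * (a * y * t * b) = (a * y * t * (b * a) * y) * t * b"
    by (simp add: mult.assoc)
  ultimately have "(a * y * t * b) * (a * y * t * b) = 0" by simp
  then show ?thesis by (rule red)
qed

lemma gen_inv:
  assumes "1 \<in> S" "1 \<in> T" "\<forall>a\<in>S. \<forall>b\<in>S. a * b \<in> S" "\<forall>a\<in>T. \<forall>b\<in>T. a * b \<in> T"
  shows "x \<in> gen (S \<union> T) \<Longrightarrow> \<exists>s\<in>S. \<exists>t\<in>T. \<forall>u v. u * x * v = 0 \<longrightarrow> u * s * t * (v::'a) = 0"
proof (induction x rule: gen.induct)
  case gen_one
  then show ?case using assms(1,2) by (intro bexI[of _ 1]) auto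
next
  case (gen_step x y)
  then obtain s t where st: "s \<in> S" "t \<in> T" "\<forall>u v. u * x * v = 0 \<longrightarrow> u * s * t * v = 0" by blast
  show ?case
  proof (cases "y \<in> S")
    case True
    have "\<forall>u v. u * (x * y) * v = 0 \<longrightarrow> u * (s * y) * t * v = 0"
    proof (intro allI impI)
      fix u v assume "u * (x * y) * v = 0"
      then have "u * x * (y * v) = 0" by (simp add: mult.assoc)
      then have "u * s * t * (y * v) = 0" using st by blast
      then have "(u * s) * t * y * v = 0" by (simp add: mult.assoc)
      then have "(u * s) * y * t * v = 0" by (rule red_swap)
      then show "u * (s * y) * t * v = 0" by (simp add: mult.assoc)
    qed
    then show ?thesis using st True assms(3) by blast
  next
    case False
    then have y: "y \<in> T" using gen_step by blast
    have "\<forall>u v. u * (x * y) * v = 0 \<longrightarrow> u * s * (t * y) * v = 0"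
    proof (intro allI impI)
      fix u v assume "u * (x * y) * v = 0"
      then have "u * x * (y * v) = 0" by (simp add: mult.assoc)
      then have "u * s * t * (y * v) = 0" using st by blast
      then show "u * s * (t * y) * v = 0" by (simp add: mult.assoc)
    qed
    then show ?thesis using st y assms(4) by blast
  qed
qed

lemma Q:
  assumes S: "(S::'a set) \<in> maxDen_l" and T: "T \<in> maxDen_l" and ne: "S \<noteq> T"
  shows "S \<inter> ass T \<noteq> {}"
proof
  assume dis: "S \<inter> ass T = {}"
  have dS: "left_den S" and dT: "left_den T" using S T by (auto simp: maxDen_l_def)
  have mS: "mult_subset S" and mT: "mult_subset T"
    using dS dT by (auto simp: left_den_def left_Ore_def)
  let ?M = "gen (S \<union> T)"
  have ore: "\<exists>m\<in>?M. \<exists>r'. m * r = r' * y" if "y \<in> S \<union> T" for y r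
  proof -
    from that show ?thesis
    proof
      assume "y \<in> S"
      then obtain s' r' where "s' \<in> S" "s' * r = r' * y"
        using dS den_Ore by blast
      then show ?thesis using gen_sub[of s' "S \<union> T"] by blast
    next
      assume "y \<in> T"
      then obtain s' r' where "s' \<in> T" "s' * r = r' * y"
        using dT den_Ore by blast
      then show ?thesis using gen_sub[of s' "S \<union> T"] by blast
    qed
  qed
  have zero: "0 \<notin> ?M"
  proof
    assume "0 \<in> ?M"
    have "\<exists>s\<in>S. \<exists>t\<in>T. \<forall>u v. u * 0 * v = 0 \<longrightarrow> u * s * t * (v::'a) = 0"
      using gen_inv[of S T 0] mS mT \<open>0 \<in> ?M\<close> unfolding mult_subset_def by blast
    then obtain s t where st: "s \<in> S" "t \<in> T" "\<forall>u v. u * 0 * v = 0 \<longrightarrow> u * s * t * (v::'a) = 0"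
      by blast
    have "1 * s * t * (1::'a) = 0" using st(3) by (metis mult_zero_left mult_zero_right)
    then have "s * t = 0" by simp
    then obtain t' where "t' \<in> T" "t' * s = 0" using dT st den_den by blast
    then have "s \<in> ass T" by (auto simp: ass_def)
    then show False using dis st by blast
  qed
  have "left_den ?M"
    unfolding left_den_def left_Ore_def mult_subset_def
  proof (intro conjI ballI allI impI)
    show "1 \<in> ?M" by (rule gen_one)
    show "0 \<notin> ?M" by (rule zero)
    show "a * b \<in> ?M" if "a \<in> ?M" "b \<in> ?M" for a b using gen_mult that by blast
    show "\<exists>s'\<in>?M. \<exists>r'. s' * r = r' * s" if "s \<in> ?M" for r s
      using gen_Ore[OF ore that] by blast
    show "\<exists>t\<in>?M. t * r = 0" if "s \<in> ?M" "r * s = 0" for r s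
      using that red_rev by blast
  qed
  moreover have "S \<subseteq> ?M" "T \<subseteq> ?M" using gen_sub by blast+
  ultimately have "?M = S" using S by (auto simp: maxDen_l_def)
  then have "T \<subseteq> S" using \<open>T \<subseteq> ?M\<close> by simp
  then show False using T dS ne by (auto simp: maxDen_l_def)
qed

end

lemma chain_den:
  assumes "C \<in> chains {S. left_den S \<and> T \<subseteq> S}" "C \<noteq> {}"
  shows "left_den (\<Union>C)"
proof -
  have CD: "\<And>X. X \<in> C \<Longrightarrow> left_den X" using assms(1) chainsD2 by blast
  have ch: "\<And>X Y. X \<in> C \<Longrightarrow> Y \<in> C \<Longrightarrow> X \<subseteq> Y \<or> Y \<subseteq> X" using assms(1) chainsD by blast
  show ?thesis
    unfolding left_den_def left_Ore_def mult_subset_def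
  proof (intro conjI ballI allI impI)
    obtain X where X: "X \<in> C" using assms(2) by blast
    then show "1 \<in> \<Union>C" using CD[OF X] by (auto simp: left_den_def left_Ore_def mult_subset_def)
    show "0 \<notin> \<Union>C" using CD by (auto simp: left_den_def left_Ore_def mult_subset_def)
    show "a * b \<in> \<Union>C" if ab: "a \<in> \<Union>C" "b \<in> \<Union>C" for a b
    proof -
      obtain A B where "A \<in> C" "B \<in> C" "a \<in> A" "b \<in> B" using ab by blast
      note AB = this
      show ?thesis
      proof (cases "A \<subseteq> B")
        case True
        then have "a * b \<in> B" using den_mult[OF CD[OF AB(2)]] AB by blast
        then show ?thesis using AB by blast
      next
        case False
        then have "B \<subseteq> A" using ch[OF AB(1,2)] by blast
        then have "a * b \<in> A" using den_mult[OF CD[OF AB(1)]] AB by blast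
        then show ?thesis using AB by blast
      qed
    qed
    show "\<exists>s'\<in>\<Union>C. \<exists>r'. s' * r = r' * s" if sc: "s \<in> \<Union>C" for r s
    proof -
      obtain A where "A \<in> C" "s \<in> A" using sc by blast
      then show ?thesis using CD[of A] den_Ore[of A s r] by blast
    qed
    show "\<exists>t\<in>\<Union>C. t * r = 0" if sc: "s \<in> \<Union>C" "r * s = 0" for r s
    proof -
      obtain A where "A \<in> C" "s \<in> A" using sc by blast
      then show ?thesis using CD[of A] sc den_den[of A s r] by blast
    qed
  qed
qed

lemma exists_max:
  assumes "left_den (T::'a::ring_1 set)"
  shows "\<exists>M\<in>maxDen_l. T \<subseteq> M"
proof -
  let ?A = "{S. left_den S \<and> T \<subseteq> S}"
  have "\<forall>C\<in>chains ?A. \<exists>U\<in>?A. \<forall>X\<in>C. X \<subseteq> U"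
  proof
    fix C assume C: "C \<in> chains ?A"
    show "\<exists>U\<in>?A. \<forall>X\<in>C. X \<subseteq> U"
    proof (cases "C = {}")
      case True then show ?thesis using assms by auto
    next
      case False
      then have "\<Union>C \<in> ?A" using chain_den[OF C False] chainsD2[OF C] by blast
      then show ?thesis by blast
    qed
  qed
  then obtain M where M: "M \<in> ?A" "\<forall>X\<in>?A. M \<subseteq> X \<longrightarrow> X = M" using Zorn_Lemma2 by blast
  then have "M \<in> maxDen_l" unfolding maxDen_l_def by auto
  then show ?thesis using M by blast
qed

lemma ass_disj: assumes "left_den S" shows "S \<inter> ass S = {}"
proof (rule ccontr)
  assume "S \<inter> ass S \<noteq> {}"
  then obtain r s where "r \<in> S" "s \<in> S" "s * r = 0" unfolding ass_def by blast
  then have "0 \<in> S" using den_mult[OF assms] by metis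
  then show False using den_zero_notin[OF assms] by blast
qed

lemma ass_left: assumes "left_den S" "s \<in> S" "r \<in> ass S" shows "s * r \<in> ass S"
proof -
  obtain t where t: "t \<in> S" "t * r = 0" using assms(3) by (auto simp: ass_def)
  obtain t' r' where "t' \<in> S" "t' * s = r' * t" using assms(1) t(1) den_Ore by blast
  then have "t' * (s * r) = 0" by (metis mult.assoc t(2) mult_zero_right)
  then show ?thesis using \<open>t' \<in> S\<close> by (auto simp: ass_def)
qed

lemma ass_right: "s \<in> ass S \<Longrightarrow> s * r \<in> ass S"
  by (auto simp: ass_def) (metis mult.assoc mult_zero_left)

lemma kerl_sub: "s \<in> S \<Longrightarrow> kerl s \<subseteq> ass S"
  by (auto simp: kerl_def ass_def)

theorem theorem4p5:
  fixes S :: "nat \<Rightarrow> 'a::ring_1 set" and n :: nat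
  assumes "left_localizable TYPE('a)"
    and "maxDen_l = S ` {1..n}"
    and "inj_on S {1..n}"
  shows "(n = 1 \<longrightarrow> core (S 1) = S 1 \<and> S 1 = UNIV - {0}) \<and>
         (n \<ge> 2 \<longrightarrow> (\<forall>i\<in>{1..n}. core (S i) = S i \<inter> (\<Inter>j\<in>{1..n} - {i}. ass (S j))))"
proof -
  have cover: "\<exists>k\<in>{1..n}. r \<in> S k" if rn: "r \<noteq> 0" for r :: 'a
  proof -
    obtain T where "left_den T" "r \<in> T" using assms(1) rn unfolding left_localizable_def by blast
    then obtain M where "M \<in> maxDen_l" "r \<in> M" using exists_max by blast
    then show ?thesis using assms(2) by auto
  qed
  have red: "x = 0" if "x * x = 0" for x :: 'a
  proof (rule ccontr)
    assume "x \<noteq> 0"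
    then obtain T where "left_den T" "x \<in> T" using assms(1) unfolding left_localizable_def by blast
    then have "x * x \<in> T" using den_mult by blast
    then show False using that den_zero_notin \<open>left_den T\<close> by force
  qed
  have den: "left_den (S k)" if "k \<in> {1..n}" for k
    using assms(2) that by (auto simp: maxDen_l_def)
  have part1: "n = 1 \<longrightarrow> core (S 1) = S 1 \<and> S 1 = UNIV - {0}"
  proof
    assume n1: "n = 1"
    have d1: "left_den (S 1)" using den n1 by simp
    have "r \<in> S 1" if "r \<noteq> 0" for r using cover[OF that] n1 by simp
    then have S1: "S 1 = UNIV - {0}" using den_zero_notin[OF d1] by blast
    have "ass (S 1) \<subseteq> {0}"
    proof
      fix r assume "r \<in> ass (S 1)"
      then obtain s where "s \<in> S 1" "s * r = 0" by (auto simp: ass_def)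
      then show "r \<in> {0}"
      proof -
        assume a: "s \<in> S 1" "s * r = 0"
        show ?thesis
        proof (rule ccontr)
          assume "r \<notin> {0}"
          then have "r \<in> S 1" using S1 by blast
          then have "s * r \<in> S 1" using den_mult[OF d1 a(1)] by blast
          then show False using a(2) S1 by simp
        qed
      qed
    qed
    then have "kerl s = ass (S 1)" if "s \<in> S 1" for s
      using kerl_sub[OF that] by (auto simp: kerl_def)
    then show "core (S 1) = S 1 \<and> S 1 = UNIV - {0}" using S1 by (auto simp: core_def)
  qed
  have part2: "\<forall>i\<in>{1..n}. core (S i) = S i \<inter> (\<Inter>j\<in>{1..n} - {i}. ass (S j))"
  proof
    fix i assume i: "i \<in> {1..n}"
    show "core (S i) = S i \<inter> (\<Inter>j\<in>{1..n} - {i}. ass (S j))"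
    proof
      show "core (S i) \<subseteq> S i \<inter> (\<Inter>j\<in>{1..n} - {i}. ass (S j))"
      proof
        fix s assume s: "s \<in> core (S i)"
        then have sS: "s \<in> S i" and k: "kerl s = ass (S i)" by (auto simp: core_def)
        have "s \<in> ass (S j)" if j: "j \<in> {1..n} - {i}" for j
        proof -
          have "S j \<noteq> S i"
          proof
            assume "S j = S i"
            then have "j = i" using inj_onD[OF assms(3)] i j by blast
            then show False using j by blast
          qed
          moreover have "S j \<in> maxDen_l" "S i \<in> maxDen_l" using assms(2) i j by auto
          ultimately obtain t where t: "t \<in> S j" "t \<in> ass (S i)"
            using Q[OF red, of "S j" "S i"] by blast
          then have "s * t = 0" using k by (auto simp: kerl_def)
          then obtain t' where "t' \<in> S j" "t' * s = 0" using den[of j] j t(1) den_den by blast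
          then show ?thesis by (auto simp: ass_def)
        qed
        then show "s \<in> S i \<inter> (\<Inter>j\<in>{1..n} - {i}. ass (S j))" using sS by blast
      qed
    next
      show "S i \<inter> (\<Inter>j\<in>{1..n} - {i}. ass (S j)) \<subseteq> core (S i)"
      proof
        fix s assume s: "s \<in> S i \<inter> (\<Inter>j\<in>{1..n} - {i}. ass (S j))"
        have "ass (S i) \<subseteq> kerl s"
        proof
          fix r assume r: "r \<in> ass (S i)"
          show "r \<in> kerl s"
          proof (rule ccontr)
            assume "r \<notin> kerl s"
            then have "s * r \<noteq> 0" by (auto simp: kerl_def)
            then obtain k where k: "k \<in> {1..n}" "s * r \<in> S k" using cover by blast
            show False
            proof (cases "k = i")
              case True
              then have "s * r \<in> ass (S i)" using ass_left den i s r by blast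
              then show False using ass_disj[OF den[OF i]] k True by blast
            next
              case False
              then have "s \<in> ass (S k)" using s k by blast
              then have "s * r \<in> ass (S k)" by (rule ass_right)
              then show False using ass_disj[OF den[OF k(1)]] k by blast
            qed
          qed
        qed
        then show "s \<in> core (S i)" using s kerl_sub[of s "S i"] by (auto simp: core_def)
      qed
    qed
  qed
  show ?thesis using part1 part2 by blast
qed

end
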